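(* Let $T\ge1$, $n\ge2$, $\tau\in\{1,\dots,T\}$, $z^*\in\mathbb{R}$, and for $t=1,\dots,T$ let $\mu_t\in\mathbb{R}$, $\sigma_t>0$. Under $\mathbf{H_0}$ the real numbers $X_{t,k}$ ($t\le T$, $k\le n$) are independent with $X_{t,k}\sim\mathcal{N}(\mu_t,\sigma_t^2)$; under $\mathbf{H_1^\tau}$ they are generated the same way and then $X_{\tau,J}$ is replaced by $z^*$, with $J$ uniform on $\{1,\dots,n\}$ independent of the data. Let $\hat\mu_t=\frac{1}{nt}\sum_{j=1}^t\sum_{k=1}^nX_{j,k}$ ($\hat\mu_0:=0$). Then the ratio of the joint density of $(\hat\mu_1,\dots,\hat\mu_T)$ under $\mathbf{H_1^\tau}$ to that under $\mathbf{H_0}$ equals $\varphi(\hat\mu_\tau;m_1,v_1)/\varphi(\hat\mu_\tau;m_0,v_0)$, where $\varphi(\cdot;m,v)$ is the $\mathcal{N}(m,v)$ density and \[ m_0=\tfrac{\tau-1}{\tau}\hat\mu_{\tau-1}+\tfrac{\mu_\tau}{\tau},\quad v_0=\tfrac{\sigma_\tau^2}{\tau^2n},\quad m_1=\tfrac{\tau-1}{\tau}\hat\mu_{\tau-1}+\tfrac{(n-1)\mu_\tau+z^*}{\tau n},\quad v_1=\tfrac{(n-1)\sigma_\tau^2}{\tau^2n^2}. \] In particular, the likelihood ratio test of $\mathbf{H_0}$ against $\mathbf{H_1^\tau}$ depends on the distribution parameters only through $(\mu_\tau,\sigma_\tau^2)$, not on $(\mu_t,\sigma_t^2)$ for $t\neq\tau$.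 *)

theory Defs
  imports "HOL-Probability.Probability"
begin

text \<open>Law of the data array X = (X_{t,k}), t in {1..T}, k in {1..n}, under H0:
independent, X_{t,k} ~ N(mu_t, sigma_t^2) (normal_density takes the standard deviation).\<close>
definition H0_data :: "nat \<Rightarrow> nat \<Rightarrow> (nat \<Rightarrow> real) \<Rightarrow> (nat \<Rightarrow> real) \<Rightarrow> (nat \<times> nat \<Rightarrow> real) measure" where
  "H0_data T n \<mu> \<sigma> =
     PiM ({1..T} \<times> {1..n}) (\<lambda>(t,k). density lborel (\<lambda>x. ennreal (normal_density (\<mu> t) (\<sigma> t) x)))"

definition H1_data :: "nat \<Rightarrow> nat \<Rightarrow> (nat \<Rightarrow> real) \<Rightarrow> (nat \<Rightarrow> real) \<Rightarrow> nat \<Rightarrow> real \<Rightarrow> (nat \<times> nat \<Rightarrow> real) measure" where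
  "H1_data T n \<mu> \<sigma> \<tau> z =
     distr (H0_data T n \<mu> \<sigma> \<Otimes>\<^sub>M uniform_count_measure {1..n})
           (PiM ({1..T} \<times> {1..n}) (\<lambda>_. lborel))
           (\<lambda>(x, j). x((\<tau>, j) := z))"

definition muhat :: "nat \<Rightarrow> nat \<Rightarrow> (nat \<times> nat \<Rightarrow> real) \<Rightarrow> (nat \<Rightarrow> real)" where
  "muhat T n x = (\<lambda>t\<in>{1..T}. (\<Sum>j=1..t. \<Sum>k=1..n. x (j, k)) / (real n * real t))"

abbreviation lebT :: "nat \<Rightarrow> (nat \<Rightarrow> real) measure" where
  "lebT T \<equiv> PiM {1..T} (\<lambda>_. lborel)"

definition phi :: "real \<Rightarrow> real \<Rightarrow> real \<Rightarrow> real" where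
  "phi x m v = normal_density m (sqrt v) x"

end

theory Submission
  imports Defs
begin


lemma step_cov:
  fixes I :: "'i set"
  assumes I: "finite I" "i \<in> I" and a: "a \<noteq> 0"
    and c[measurable]: "c \<in> borel_measurable (PiM I (\<lambda>_. lborel))"
    and cind: "\<And>w v. c (w(i:=v)) = c w"
    and G[measurable]: "G \<in> borel_measurable (PiM I (\<lambda>_. lborel))"
  shows "(\<integral>\<^sup>+ w. G (w(i := a * w i + c w)) \<partial>PiM I (\<lambda>_. lborel))
       = ennreal (1/\<bar>a\<bar>) * (\<integral>\<^sup>+ w. G w \<partial>PiM I (\<lambda>_. lborel))"
proof -
  interpret product_sigma_finite "\<lambda>_. lborel :: real measure" by standard
  define J where "J = I - {i}"
  have IJ: "I = insert i J" "i \<notin> J" "finite J" using I by (auto simp: J_def)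
  have E: "(\<lambda>w. w(i := a * w i + c w)) \<in> measurable (PiM I (\<lambda>_. lborel)) (PiM I (\<lambda>_. lborel))"
  proof (rule measurable_PiM_single')
    fix j assume "j \<in> I"
    show "(\<lambda>w. (w(i := a * w i + c w)) j) \<in> measurable (PiM I (\<lambda>_. lborel)) lborel"
      unfolding measurable_lborel2 using \<open>j \<in> I\<close> I by (cases "j = i") auto
  next
    show "(\<lambda>w. w(i := a * w i + c w)) \<in> space (PiM I (\<lambda>_. lborel)) \<rightarrow> (\<Pi>\<^sub>E i\<in>I. space lborel)"
      using I by (auto simp: space_PiM PiE_def extensional_def)
  qed
  have GE: "(\<lambda>w. G (w(i := a * w i + c w))) \<in> borel_measurable (PiM I (\<lambda>_. lborel))"
    using measurable_comp[OF E G] by (simp add: comp_def)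
  have "(\<integral>\<^sup>+ w. G (w(i := a * w i + c w)) \<partial>PiM I (\<lambda>_. lborel))
      = (\<integral>\<^sup>+ x. (\<integral>\<^sup>+ y. G ((x(i := y))(i := a * y + c (x(i:=y)))) \<partial>lborel) \<partial>PiM J (\<lambda>_. lborel))"
    using product_nn_integral_insert[OF IJ(3,2), of "\<lambda>w. G (w(i := a * w i + c w))"] GE IJ(1)
    by simp
  also have "\<dots> = (\<integral>\<^sup>+ x. ennreal (1/\<bar>a\<bar>) * (\<integral>\<^sup>+ y. G (x(i := y)) \<partial>lborel) \<partial>PiM J (\<lambda>_. lborel))"
  proof (rule nn_integral_cong)
    fix x :: "'i \<Rightarrow> real" assume x: "x \<in> space (PiM J (\<lambda>_. lborel))"
    have f: "(\<lambda>y. G (x(i := y))) \<in> borel_measurable lborel"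
      using measurable_comp[OF measurable_component_update[OF x IJ(2)], of G] G IJ(1)
      by (simp add: comp_def)
    have "(\<integral>\<^sup>+ y. G (x(i := y)) \<partial>lborel) = ennreal \<bar>a\<bar> * (\<integral>\<^sup>+ y. G (x(i := c x + a * y)) \<partial>lborel)"
      using nn_integral_real_affine[of "\<lambda>y. G (x(i := y))" a "c x"] f a by simp
    then show "(\<integral>\<^sup>+ y. G ((x(i := y))(i := a * y + c (x(i:=y)))) \<partial>lborel) = ennreal (1/\<bar>a\<bar>) * (\<integral>\<^sup>+ y. G (x(i := y)) \<partial>lborel)"
      using a by (simp add: cind add.commute ennreal_mult'[symmetric] mult.assoc[symmetric] flip: ennreal_mult)
  qed
  also have "\<dots> = ennreal (1/\<bar>a\<bar>) * (\<integral>\<^sup>+ x. (\<integral>\<^sup>+ y. G (x(i := y)) \<partial>lborel) \<partial>PiM J (\<lambda>_. lborel))"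
  proof (rule nn_integral_cmult)
    have G'[measurable]: "G \<in> borel_measurable (PiM (insert i J) (\<lambda>_. lborel))" using G IJ(1) by simp
    show "(\<lambda>x. \<integral>\<^sup>+ y. G (x(i := y)) \<partial>lborel) \<in> borel_measurable (PiM J (\<lambda>_. lborel))"
      by measurable
  qed
  also have "\<dots> = ennreal (1/\<bar>a\<bar>) * (\<integral>\<^sup>+ w. G w \<partial>PiM I (\<lambda>_. lborel))"
    using product_nn_integral_insert[OF IJ(3,2), of G] G IJ(1) by simp
  finally show ?thesis .
qed

definition Lm :: "nat \<Rightarrow> nat \<Rightarrow> nat \<Rightarrow> (nat \<Rightarrow> real) \<Rightarrow> (nat \<Rightarrow> real)" where
  "Lm T n m r = (\<lambda>t\<in>{1..T}. if t \<le> m then (\<Sum>j=1..t. r j) / (real n * real t) else r t)"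

lemma Lm_step:
  assumes "r \<in> space (lebT T)" "Suc m \<le> T" "n \<ge> 1"
  shows "Lm T n (Suc m) r = (Lm T n m r)(Suc m := (1 / (real n * real (Suc m))) * Lm T n m r (Suc m)
            + real n * real m * Lm T n m r m / (real n * real (Suc m)))"
proof (rule ext)
  fix t
  show "Lm T n (Suc m) r t = ((Lm T n m r)(Suc m := (1 / (real n * real (Suc m))) * Lm T n m r (Suc m)
            + real n * real m * Lm T n m r m / (real n * real (Suc m)))) t"
  proof (cases "t = Suc m")
    case True
    have "(\<Sum>j=1..Suc m. r j) = (\<Sum>j=1..m. r j) + r (Suc m)" by simp
    moreover have "real n * real m * Lm T n m r m = (\<Sum>j=1..m. r j)"
      using assms by (cases m) (auto simp: Lm_def)
    ultimately show ?thesis using True assms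
      by (simp add: Lm_def add_divide_distrib)
  next
    case False
    then show ?thesis by (simp add: Lm_def)
  qed
qed

lemma iter_cov:
  assumes "m \<le> T" "n \<ge> 1" and G[measurable]: "G \<in> borel_measurable (lebT T)"
  shows "(\<integral>\<^sup>+ r. G (Lm T n m r) \<partial>lebT T) = ennreal (\<Prod>t=1..m. real n * real t) * (\<integral>\<^sup>+ y. G y \<partial>lebT T)"
  using assms
proof (induction m arbitrary: G)
  case 0
  have "(\<integral>\<^sup>+ r. G (Lm T n 0 r) \<partial>lebT T) = (\<integral>\<^sup>+ y. G y \<partial>lebT T)"
    by (rule nn_integral_cong) (auto simp: Lm_def space_PiM PiE_def extensional_def restrict_def intro!: arg_cong[where f=G])
  then show ?case by simp
next
  case (Suc m)
  note G' = Suc.prems(3)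
  define a where "a = 1 / (real n * real (Suc m))"
  define c where "c = (\<lambda>w::nat\<Rightarrow>real. real n * real m * w m / (real n * real (Suc m)))"
  have a: "a \<noteq> 0" using Suc.prems by (simp add: a_def)
  have cm: "c \<in> borel_measurable (lebT T)"
  proof (cases "m \<in> {1..T}")
    case True then show ?thesis unfolding c_def by measurable
  next
    case False then have "m = 0" using Suc.prems by auto
    then show ?thesis by (simp add: c_def)
  qed
  have cind: "\<And>w v. c (w(Suc m := v)) = c w" by (simp add: c_def)
  have mem: "Suc m \<in> {1..T}" using Suc.prems by auto
  have E: "(\<lambda>w. w(Suc m := a * w (Suc m) + c w)) \<in> measurable (lebT T) (lebT T)"
  proof (rule measurable_PiM_single')
    fix j assume "j \<in> {1..T}"
    show "(\<lambda>w. (w(Suc m := a * w (Suc m) + c w)) j) \<in> measurable (lebT T) lborel"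
      unfolding measurable_lborel2 using \<open>j \<in> {1..T}\<close> mem cm by (cases "j = Suc m") auto
  next
    show "(\<lambda>w. w(Suc m := a * w (Suc m) + c w)) \<in> space (lebT T) \<rightarrow> (\<Pi>\<^sub>E i\<in>{1..T}. space lborel)"
      using mem by (auto simp: space_PiM PiE_def extensional_def)
  qed
  have GE: "(\<lambda>w. G (w(Suc m := a * w (Suc m) + c w))) \<in> borel_measurable (lebT T)"
    using measurable_comp[OF E G'] by (simp add: comp_def)
  have "(\<integral>\<^sup>+ r. G (Lm T n (Suc m) r) \<partial>lebT T) = (\<integral>\<^sup>+ r. G ((Lm T n m r)(Suc m := a * Lm T n m r (Suc m) + c (Lm T n m r))) \<partial>lebT T)"
    by (rule nn_integral_cong) (use Suc.prems in \<open>simp add: Lm_step a_def c_def\<close>)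
  also have "\<dots> = ennreal (\<Prod>t=1..m. real n * real t) * (\<integral>\<^sup>+ y. G (y(Suc m := a * y (Suc m) + c y)) \<partial>lebT T)"
    by (rule Suc.IH[OF _ _ GE]) (use Suc.prems in auto)
  also have "(\<integral>\<^sup>+ y. G (y(Suc m := a * y (Suc m) + c y)) \<partial>lebT T) = ennreal (1/\<bar>a\<bar>) * (\<integral>\<^sup>+ y. G y \<partial>lebT T)"
    by (rule step_cov[OF _ mem a cm cind G']) simp
  also have "ennreal (\<Prod>t=1..m. real n * real t) * (ennreal (1/\<bar>a\<bar>) * (\<integral>\<^sup>+ y. G y \<partial>lebT T))
     = ennreal (\<Prod>t=1..Suc m. real n * real t) * (\<integral>\<^sup>+ y. G y \<partial>lebT T)"
    using Suc.prems by (simp add: a_def mult.assoc[symmetric] ennreal_mult'[symmetric] prod_nonneg mult.commute)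
  finally show ?case .
qed

definition Linv :: "nat \<Rightarrow> nat \<Rightarrow> (nat \<Rightarrow> real) \<Rightarrow> (nat \<Rightarrow> real)" where
  "Linv T n y = (\<lambda>t\<in>{1..T}. real n * real t * y t - real n * real (t - 1) * y (t - 1))"

lemma Linv_L:
  assumes "r \<in> space (lebT T)" "n \<ge> 1"
  shows "Linv T n (Lm T n T r) = r"
proof (rule ext)
  fix t
  show "Linv T n (Lm T n T r) t = r t"
  proof (cases "t \<in> {1..T}")
    case True
    show ?thesis
    proof (cases "t = 1")
      case True then show ?thesis using assms \<open>t \<in> {1..T}\<close> by (simp add: Linv_def Lm_def)
    next
      case False
      then obtain s where s: "t = Suc s" "s \<ge> 1" using True by (cases t) auto
      have "(\<Sum>j=1..Suc s. r j) = (\<Sum>j=1..s. r j) + r (Suc s)" by simp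
      then show ?thesis using s assms True by (simp add: Linv_def Lm_def)
    qed
  next
    case False
    then show ?thesis using assms by (auto simp: Linv_def space_PiM PiE_def extensional_def)
  qed
qed

lemma Lm_meas: "Lm T n T \<in> measurable (lebT T) (lebT T)"
proof (rule measurable_PiM_single')
  fix t assume t: "t \<in> {1..T}"
  have "(\<lambda>r. (\<Sum>j=1..t. r j) / (real n * real t)) \<in> borel_measurable (lebT T)"
    using t by (intro borel_measurable_divide borel_measurable_sum) auto
  then show "(\<lambda>r. Lm T n T r t) \<in> measurable (lebT T) lborel"
    unfolding measurable_lborel2 using t by (simp add: Lm_def)
qed (auto simp: Lm_def space_PiM)

lemma Linv_meas: "Linv T n \<in> measurable (lebT T) (lebT T)"
proof (rule measurable_PiM_single')
  fix t assume t: "t \<in> {1..T}"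
  have "(\<lambda>y. real n * real t * y t - real n * real (t - 1) * y (t - 1)) \<in> borel_measurable (lebT T)"
  proof (cases "t = 1")
    case True then show ?thesis using t by simp
  next
    case False then have "t - 1 \<in> {1..T}" using t by auto
    then show ?thesis using t by measurable
  qed
  then show "(\<lambda>y. Linv T n y t) \<in> measurable (lebT T) lborel"
    unfolding measurable_lborel2 using t by (simp add: Linv_def)
qed (auto simp: Linv_def space_PiM)

lemma distr_L_density:
  assumes n: "n \<ge> 1" and h[measurable]: "h \<in> borel_measurable (lebT T)"
  shows "distr (density (lebT T) h) (lebT T) (Lm T n T)
       = density (lebT T) (\<lambda>y. ennreal (\<Prod>t=1..T. real n * real t) * h (Linv T n y))"
proof (rule measure_eqI)
  show "sets (distr (density (lebT T) h) (lebT T) (Lm T n T)) = sets (density (lebT T) (\<lambda>y. ennreal (\<Prod>t=1..T. real n * real t) * h (Linv T n y)))"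
    by simp
next
  fix A assume "A \<in> sets (distr (density (lebT T) h) (lebT T) (Lm T n T))"
  then have A[measurable]: "A \<in> sets (lebT T)" by simp
  note Lm_meas[measurable] Linv_meas[measurable]
  have hL: "(\<lambda>y. h (Linv T n y)) \<in> borel_measurable (lebT T)"
    using measurable_comp[OF Linv_meas h] by (simp add: comp_def)
  have hA: "(\<lambda>y. h (Linv T n y) * indicator A y) \<in> borel_measurable (lebT T)"
    by (intro borel_measurable_times_ennreal hL borel_measurable_indicator A)
  have pre: "Lm T n T -` A \<inter> space (lebT T) \<in> sets (lebT T)" by measurable
  have "emeasure (distr (density (lebT T) h) (lebT T) (Lm T n T)) A
      = emeasure (density (lebT T) h) (Lm T n T -` A \<inter> space (lebT T))"
  proof -
    have Lmd: "Lm T n T \<in> measurable (density (lebT T) h) (lebT T)"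
      using Lm_meas by (simp add: measurable_cong_sets[OF sets_density refl])
    show ?thesis using emeasure_distr[OF Lmd A] by simp
  qed
  also have "\<dots> = (\<integral>\<^sup>+ r. h r * indicator (Lm T n T -` A \<inter> space (lebT T)) r \<partial>lebT T)"
    by (rule emeasure_density[OF h pre])
  also have "\<dots> = (\<integral>\<^sup>+ r. (\<lambda>y. h (Linv T n y) * indicator A y) (Lm T n T r) \<partial>lebT T)"
  proof (rule nn_integral_cong)
    fix r assume r: "r \<in> space (lebT T)"
    have "Linv T n (Lm T n T r) = r" by (rule Linv_L[OF r n])
    then show "h r * indicator (Lm T n T -` A \<inter> space (lebT T)) r = (\<lambda>y. h (Linv T n y) * indicator A y) (Lm T n T r)"
      using r by (simp add: indicator_def)
  qed
  also have "\<dots> = ennreal (\<Prod>t=1..T. real n * real t) * (\<integral>\<^sup>+ y. h (Linv T n y) * indicator A y \<partial>lebT T)"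
    by (rule iter_cov[OF order.refl n hA])
  also have "\<dots> = (\<integral>\<^sup>+ y. (ennreal (\<Prod>t=1..T. real n * real t) * h (Linv T n y)) * indicator A y \<partial>lebT T)"
    using nn_integral_cmult[OF hA, of "ennreal (\<Prod>t=1..T. real n * real t)"] by (simp add: mult.assoc)
  also have "\<dots> = emeasure (density (lebT T) (\<lambda>y. ennreal (\<Prod>t=1..T. real n * real t) * h (Linv T n y))) A"
    by (rule emeasure_density[symmetric]) (use hL A in auto)
  finally show "emeasure (distr (density (lebT T) h) (lebT T) (Lm T n T)) A = emeasure (density (lebT T) (\<lambda>y. ennreal (\<Prod>t=1..T. real n * real t) * h (Linv T n y))) A" .
qed

lemma indicator_PiE_prod:
  assumes "x \<in> extensional I" "finite I"
  shows "indicator (Pi\<^sub>E I A) x = (\<Prod>t\<in>I. indicator (A t) (x t) :: ennreal)"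
proof (cases "x \<in> Pi\<^sub>E I A")
  case True then show ?thesis by (auto simp: indicator_def PiE_def Pi_def)
next
  case False
  then obtain t where "t \<in> I" "x t \<notin> A t" using assms by (auto simp: PiE_def Pi_def)
  then show ?thesis using False assms by (auto simp: indicator_def PiE_def Pi_def)
qed

lemma PiM_density_prod:
  fixes g :: "'i \<Rightarrow> real \<Rightarrow> real"
  assumes I: "finite I" and g[measurable]: "\<And>t. g t \<in> borel_measurable borel"
    and gnn: "\<And>t x. g t x \<ge> 0"
    and P: "\<And>t. t \<in> I \<Longrightarrow> prob_space (density lborel (\<lambda>x. ennreal (g t x)))"
  shows "PiM I (\<lambda>t. density lborel (\<lambda>x. ennreal (g t x)))
       = density (PiM I (\<lambda>_. lborel)) (\<lambda>r. ennreal (\<Prod>t\<in>I. g t (r t)))"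
proof -
  define M where "M t = (if t \<in> I then density lborel (\<lambda>x. ennreal (g t x)) else lborel)" for t
  interpret product_sigma_finite M
    unfolding product_sigma_finite_def M_def
    using P by (auto intro: prob_space_imp_sigma_finite simp: lborel.sigma_finite_measure_axioms)
  interpret L: product_sigma_finite "\<lambda>_. lborel :: real measure" by standard
  have "PiM I (\<lambda>t. density lborel (\<lambda>x. ennreal (g t x))) = PiM I M"
    by (rule PiM_cong) (auto simp: M_def)
  also have "\<dots> = density (PiM I (\<lambda>_. lborel)) (\<lambda>r. ennreal (\<Prod>t\<in>I. g t (r t)))"
  proof (rule PiM_eqI[symmetric, OF I])
    show "sets (density (PiM I (\<lambda>_. lborel)) (\<lambda>r. ennreal (\<Prod>t\<in>I. g t (r t)))) = sets (PiM I M)"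
      by (simp add: M_def cong: sets_PiM_cong)
  next
    fix A assume A: "\<And>i. i \<in> I \<Longrightarrow> A i \<in> sets (M i)"
    then have A'[measurable]: "\<And>i. i \<in> I \<Longrightarrow> A i \<in> sets borel" by (simp add: M_def)
    have gm: "(\<lambda>r. ennreal (\<Prod>t\<in>I. g t (r t))) \<in> borel_measurable (PiM I (\<lambda>_. lborel))"
      using I by measurable
    have "emeasure (density (PiM I (\<lambda>_. lborel)) (\<lambda>r. ennreal (\<Prod>t\<in>I. g t (r t)))) (Pi\<^sub>E I A)
       = (\<integral>\<^sup>+ r. ennreal (\<Prod>t\<in>I. g t (r t)) * indicator (Pi\<^sub>E I A) r \<partial>PiM I (\<lambda>_. lborel))"
      by (rule emeasure_density[OF gm]) (use I A' in \<open>auto intro!: sets_PiM_I_finite\<close>)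
    also have "\<dots> = (\<integral>\<^sup>+ r. (\<Prod>t\<in>I. ennreal (g t (r t)) * indicator (A t) (r t)) \<partial>PiM I (\<lambda>_. lborel))"
    proof (rule nn_integral_cong)
      fix r assume "r \<in> space (PiM I (\<lambda>_. lborel :: real measure))"
      then have "r \<in> extensional I" by (simp add: space_PiM PiE_def)
      then show "ennreal (\<Prod>t\<in>I. g t (r t)) * indicator (Pi\<^sub>E I A) r = (\<Prod>t\<in>I. ennreal (g t (r t)) * indicator (A t) (r t))"
        using I by (simp add: indicator_PiE_prod prod.distrib prod_ennreal gnn)
    qed
    also have "\<dots> = (\<Prod>t\<in>I. \<integral>\<^sup>+ x. ennreal (g t x) * indicator (A t) x \<partial>lborel)"
      by (rule L.product_nn_integral_prod[OF I]) (use A' in measurable)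
    also have "\<dots> = (\<Prod>t\<in>I. emeasure (M t) (A t))"
      by (rule prod.cong[OF refl]) (simp add: M_def emeasure_density A')
    finally show "emeasure (density (PiM I (\<lambda>_. lborel)) (\<lambda>r. ennreal (\<Prod>t\<in>I. g t (r t)))) (Pi\<^sub>E I A) = (\<Prod>t\<in>I. emeasure (M t) (A t))" .
  qed
  finally show ?thesis .
qed

definition rowsum :: "nat \<Rightarrow> nat \<Rightarrow> (nat \<times> nat \<Rightarrow> real) \<Rightarrow> (nat \<Rightarrow> real)" where
  "rowsum T n x = (\<lambda>t\<in>{1..T}. \<Sum>k=1..n. x (t, k))"

lemma muhat_eq: "muhat T n x = Lm T n T (rowsum T n x)"
  by (auto simp: muhat_def Lm_def rowsum_def intro!: ext sum.cong)

lemma rowsum_meas: "rowsum T n \<in> measurable (PiM ({1..T} \<times> {1..n}) (\<lambda>_. lborel)) (lebT T)"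
proof (rule measurable_PiM_single')
  fix t assume t: "t \<in> {1..T}"
  have "(\<lambda>x. \<Sum>k=1..n. x (t, k)) \<in> borel_measurable (PiM ({1..T} \<times> {1..n}) (\<lambda>_. lborel))"
    using t by (intro borel_measurable_sum) auto
  then show "(\<lambda>x. rowsum T n x t) \<in> measurable (PiM ({1..T} \<times> {1..n}) (\<lambda>_. lborel)) lborel"
    unfolding measurable_lborel2 using t by (simp add: rowsum_def)
qed (auto simp: rowsum_def space_PiM)

lemma muhat_density_general:
  fixes g :: "nat \<Rightarrow> real \<Rightarrow> real"
  assumes n: "n \<ge> 1" and D: "sets D = sets (PiM ({1..T} \<times> {1..n}) (\<lambda>_. lborel))"
    and Dr: "distr D (lebT T) (rowsum T n) = PiM {1..T} (\<lambda>t. density lborel (\<lambda>x. ennreal (g t x)))"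
    and g[measurable]: "\<And>t. g t \<in> borel_measurable borel"
    and gnn: "\<And>t x. g t x \<ge> 0"
    and P: "\<And>t. t \<in> {1..T} \<Longrightarrow> prob_space (density lborel (\<lambda>x. ennreal (g t x)))"
  shows "distr D (lebT T) (muhat T n) = density (lebT T) (\<lambda>y. ennreal (\<Prod>t=1..T. real n * real t * g t (Linv T n y t)))"
proof -
  have rm: "rowsum T n \<in> measurable D (lebT T)"
    using rowsum_meas by (simp add: measurable_cong_sets[OF D refl])
  have hm: "(\<lambda>r. ennreal (\<Prod>t\<in>{1..T}. g t (r t))) \<in> borel_measurable (lebT T)"
    by measurable
  have "distr D (lebT T) (muhat T n) = distr D (lebT T) (Lm T n T \<circ> rowsum T n)"
    by (rule distr_cong) (auto simp: muhat_eq)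
  also have "\<dots> = distr (distr D (lebT T) (rowsum T n)) (lebT T) (Lm T n T)"
    by (rule distr_distr[symmetric, OF Lm_meas rm])
  also have "\<dots> = distr (density (lebT T) (\<lambda>r. ennreal (\<Prod>t\<in>{1..T}. g t (r t)))) (lebT T) (Lm T n T)"
    unfolding Dr by (subst PiM_density_prod) (auto intro: P gnn)
  also have "\<dots> = density (lebT T) (\<lambda>y. ennreal (\<Prod>t=1..T. real n * real t) * ennreal (\<Prod>t\<in>{1..T}. g t (Linv T n y t)))"
    by (rule distr_L_density[OF n hm])
  also have "\<dots> = density (lebT T) (\<lambda>y. ennreal (\<Prod>t=1..T. real n * real t * g t (Linv T n y t)))"
    by (intro arg_cong[where f="density (lebT T)"] ext) (auto simp: ennreal_mult'[symmetric] prod.distrib prod_nonneg gnn)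
  finally show ?thesis .
qed



lemma H0_prob: 
  assumes "\<forall>t\<in>{1..T}. \<sigma> t > 0"
  shows "prob_space (H0_data T n \<mu> \<sigma>)"
  unfolding H0_data_def using assms
  by (intro prob_space_PiM) (auto intro: prob_space_normal_density)

lemma sets_H0: "sets (H0_data T n \<mu> \<sigma>) = sets (PiM ({1..T} \<times> {1..n}) (\<lambda>_. lborel))"
  unfolding H0_data_def by (intro sets_PiM_cong) auto

lemma space_H0: "space (H0_data T n \<mu> \<sigma>) = space (PiM ({1..T} \<times> {1..n}) (\<lambda>_. lborel))"
  using sets_eq_imp_space_eq[OF sets_H0] .

lemma H0_comp_indep:
  assumes T: "T \<ge> 1" and n: "n \<ge> 1" and \<sigma>: "\<forall>t\<in>{1..T}. \<sigma> t > 0"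
  shows "prob_space.indep_vars (H0_data T n \<mu> \<sigma>) (\<lambda>_. borel) (\<lambda>i x. x i) ({1..T} \<times> {1..n})"
proof -
  let ?P = "H0_data T n \<mu> \<sigma>"
  let ?IK = "{1..T} \<times> {1..n}"
  define Mf where "Mf = (\<lambda>(t::nat,k::nat). density lborel (\<lambda>x. ennreal (normal_density (\<mu> t) (\<sigma> t) x)))"
  interpret prob_space ?P by (rule H0_prob[OF \<sigma>])
  have P: "?P = PiM ?IK Mf" by (simp add: H0_data_def Mf_def)
  have Mfp: "\<And>i. i \<in> ?IK \<Longrightarrow> prob_space (Mf i)"
    using \<sigma> by (auto simp: Mf_def intro: prob_space_normal_density)
  have sMf: "\<And>i. sets (Mf i) = sets borel" by (auto simp: Mf_def split: prod.splits)
  have ne: "?IK \<noteq> {}" using T n by auto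
  have rv: "\<And>i. i \<in> ?IK \<Longrightarrow> random_variable (Mf i) (\<lambda>x. x i)"
    unfolding P by (rule measurable_component_singleton)
  have "distr ?P (PiM ?IK Mf) (\<lambda>x. \<lambda>i\<in>?IK. x i) = distr ?P ?P (\<lambda>x. x)"
    by (rule distr_cong) (auto simp: P space_PiM PiE_def extensional_def restrict_def)
  also have "\<dots> = PiM ?IK (\<lambda>i. distr ?P (Mf i) (\<lambda>x. x i))"
    unfolding distr_id P
    by (rule PiM_cong[OF refl]) (rule distr_PiM_component[symmetric, OF Mfp], auto)
  finally have "indep_vars Mf (\<lambda>i x. x i) ?IK"
    using indep_vars_iff_distr_eq_PiM'[OF ne rv] by (simp add: P)
  then have "indep_vars (\<lambda>_. borel) (\<lambda>i x. id (x i)) ?IK"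
    by (rule indep_vars_compose2) (simp add: measurable_cong_sets[OF sMf refl])
  then show ?thesis by simp
qed

lemma sum_single_times: "(\<Sum>i\<in>{t}\<times>K. f i) = (\<Sum>k\<in>K. f (t,k))"
proof -
  have "{t} \<times> K = Pair t ` K" by auto
  then show ?thesis by (simp add: sum.reindex inj_on_def)
qed

lemma rows_law:
  fixes Kt :: "nat \<Rightarrow> nat set" and c :: "nat \<Rightarrow> real"
  assumes T: "T \<ge> 1" and n: "n \<ge> 1" and \<sigma>: "\<forall>t\<in>{1..T}. \<sigma> t > 0"
    and Kt: "\<And>t. t \<in> {1..T} \<Longrightarrow> Kt t \<subseteq> {1..n}" "\<And>t. t \<in> {1..T} \<Longrightarrow> Kt t \<noteq> {}"
  shows "distr (H0_data T n \<mu> \<sigma>) (lebT T) (\<lambda>x. \<lambda>t\<in>{1..T}. c t + (\<Sum>k\<in>Kt t. x (t, k)))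
     = PiM {1..T} (\<lambda>t. density lborel (\<lambda>x. ennreal (normal_density (c t + real (card (Kt t)) * \<mu> t) (sqrt (real (card (Kt t))) * \<sigma> t) x)))"
proof -
  let ?P = "H0_data T n \<mu> \<sigma>"
  let ?IK = "{1..T} \<times> {1..n}"
  interpret prob_space ?P by (rule H0_prob[OF \<sigma>])
  have ind: "indep_vars (\<lambda>_. borel) (\<lambda>i x. x i) ?IK" by (rule H0_comp_indep[OF T n \<sigma>])
  define B where "B t = {t} \<times> Kt t" for t
  define Y where "Y t x = c t + (\<Sum>k\<in>Kt t. x (t, k))" for t and x :: "nat \<times> nat \<Rightarrow> real"
  have B: "\<And>t. t \<in> {1..T} \<Longrightarrow> B t \<subseteq> ?IK" using Kt by (auto simp: B_def)
  have fin: "\<And>t. t \<in> {1..T} \<Longrightarrow> finite (Kt t)" using Kt(1) finite_subset by blast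
  have disj: "disjoint_family_on B {1..T}" by (auto simp: disjoint_family_on_def B_def)
  have ind2: "indep_vars (\<lambda>t. PiM (B t) (\<lambda>_. borel)) (\<lambda>t \<omega>. restrict (\<lambda>i. \<omega> i) (B t)) {1..T}"
    by (rule indep_vars_restrict[OF ind B disj])
  have Ym: "Y t \<in> borel_measurable (PiM (B t) (\<lambda>_. borel))" if "t \<in> {1..T}" for t
    unfolding Y_def B_def by (intro borel_measurable_add borel_measurable_sum) auto
  have "indep_vars (\<lambda>_. borel) (\<lambda>t x. Y t (restrict (\<lambda>i. x i) (B t))) {1..T}"
    by (rule indep_vars_compose2[OF ind2 Ym])
  moreover have "\<And>t x. Y t (restrict (\<lambda>i. x i) (B t)) = Y t x"
    unfolding Y_def B_def by (auto intro!: sum.cong)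
  ultimately have indY: "indep_vars (\<lambda>_. borel) Y {1..T}" by simp
  have rvY: "\<And>t. t \<in> {1..T} \<Longrightarrow> random_variable borel (Y t)"
    using indY by (simp add: indep_vars_def)
  have ne: "{1..T} \<noteq> {}" using T by auto
  have comp_distr: "distributed ?P lborel (\<lambda>x. x i) (normal_density (\<mu> (fst i)) (\<sigma> (fst i)))"
    if i: "i \<in> ?IK" for i
  proof -
    obtain t k where tk: "i = (t, k)" by (cases i)
    have "distr ?P lborel (\<lambda>x. x i) = distr ?P (density lborel (\<lambda>x. ennreal (normal_density (\<mu> t) (\<sigma> t) x))) (\<lambda>x. x i)"
      by (rule distr_cong) auto
    also have "\<dots> = density lborel (\<lambda>x. ennreal (normal_density (\<mu> t) (\<sigma> t) x))"
      unfolding H0_data_def using distr_PiM_component[of ?IK "\<lambda>(t,k). density lborel (\<lambda>x. ennreal (normal_density (\<mu> t) (\<sigma> t) x))" i] i \<sigma> tk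
      by (auto intro: prob_space_normal_density)
    moreover have "(\<lambda>x. x i) \<in> measurable ?P lborel"
      unfolding measurable_cong_sets[OF sets_H0 refl] measurable_lborel2 using i by measurable
    ultimately show ?thesis
      unfolding distributed_def using tk by auto
  qed
  have Ydistr: "distr ?P lborel (Y t) = density lborel (\<lambda>x. ennreal (normal_density (c t + real (card (Kt t)) * \<mu> t) (sqrt (real (card (Kt t))) * \<sigma> t) x))"
    if t: "t \<in> {1..T}" for t
  proof -
    have st: "\<sigma> t > 0" using \<sigma> t by auto
    have indB: "indep_vars (\<lambda>_. borel) (\<lambda>i x. x i) (B t)" by (rule indep_vars_subset[OF ind B[OF t]])
    have finB: "finite (B t)" "B t \<noteq> {}" using fin[OF t] Kt(2)[OF t] by (auto simp: B_def)
    have S: "distributed ?P lborel (\<lambda>x. \<Sum>i\<in>B t. x i) (normal_density (\<Sum>i\<in>B t. \<mu> (fst i)) (sqrt (\<Sum>i\<in>B t. (\<sigma> (fst i))\<^sup>2)))"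
      by (rule sum_indep_normal[OF finB indB]) (use B[OF t] \<sigma> comp_distr in auto)
    have e1: "(\<Sum>i\<in>B t. \<mu> (fst i)) = real (card (Kt t)) * \<mu> t" by (simp add: B_def sum_single_times)
    have e2: "(\<Sum>i\<in>B t. (\<sigma> (fst i))\<^sup>2) = real (card (Kt t)) * (\<sigma> t)\<^sup>2" by (simp add: B_def sum_single_times)
    have cpos: "card (Kt t) > 0" using finB fin[OF t] Kt(2)[OF t] by (simp add: card_gt_0_iff)
    have spos: "0 < sqrt (real (card (Kt t)) * (\<sigma> t)\<^sup>2)" using cpos st by simp
    have S2: "distributed ?P lborel (\<lambda>x. c t + 1 * (\<Sum>i\<in>B t. x i)) (normal_density (c t + 1 * (real (card (Kt t)) * \<mu> t)) (\<bar>1\<bar> * sqrt (real (card (Kt t)) * (\<sigma> t)\<^sup>2)))"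
      by (rule normal_density_affine) (use S e1 e2 spos in auto)
    have e3: "sqrt (real (card (Kt t)) * (\<sigma> t)\<^sup>2) = sqrt (real (card (Kt t))) * \<sigma> t"
      using st by (simp add: real_sqrt_mult)
    have e4: "(\<lambda>x. c t + 1 * (\<Sum>i\<in>B t. x i)) = Y t"
      by (auto simp: Y_def B_def sum_single_times intro!: ext)
    show ?thesis using S2 unfolding e3 e4 distributed_def by simp
  qed
  have "distr ?P (lebT T) (\<lambda>x. \<lambda>t\<in>{1..T}. c t + (\<Sum>k\<in>Kt t. x (t, k))) = distr ?P (PiM {1..T} (\<lambda>_. borel)) (\<lambda>x. \<lambda>t\<in>{1..T}. Y t x)"
    by (rule distr_cong) (auto simp: Y_def cong: sets_PiM_cong)
  also have "\<dots> = PiM {1..T} (\<lambda>t. distr ?P borel (Y t))"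
    using indep_vars_iff_distr_eq_PiM'[OF ne rvY] indY by simp
  also have "\<dots> = PiM {1..T} (\<lambda>t. density lborel (\<lambda>x. ennreal (normal_density (c t + real (card (Kt t)) * \<mu> t) (sqrt (real (card (Kt t))) * \<sigma> t) x)))"
  proof (rule PiM_cong[OF refl])
    fix t assume t: "t \<in> {1..T}"
    have "distr ?P borel (Y t) = distr ?P lborel (Y t)" by (rule distr_cong) auto
    then show "distr ?P borel (Y t) = density lborel (\<lambda>x. ennreal (normal_density (c t + real (card (Kt t)) * \<mu> t) (sqrt (real (card (Kt t))) * \<sigma> t) x))"
      using Ydistr[OF t] by simp
  qed
  finally show ?thesis .
qed

definition g0 :: "nat \<Rightarrow> (nat \<Rightarrow> real) \<Rightarrow> (nat \<Rightarrow> real) \<Rightarrow> nat \<Rightarrow> real \<Rightarrow> real" where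
  "g0 n \<mu> \<sigma> t = normal_density (real n * \<mu> t) (sqrt (real n) * \<sigma> t)"

definition g1 :: "nat \<Rightarrow> (nat \<Rightarrow> real) \<Rightarrow> (nat \<Rightarrow> real) \<Rightarrow> nat \<Rightarrow> real \<Rightarrow> nat \<Rightarrow> real \<Rightarrow> real" where
  "g1 n \<mu> \<sigma> \<tau> z t = (if t = \<tau> then normal_density (z + real (n - 1) * \<mu> t) (sqrt (real (n - 1)) * \<sigma> t)
                      else normal_density (real n * \<mu> t) (sqrt (real n) * \<sigma> t))"

lemma H0_rows:
  assumes T: "T \<ge> 1" and n: "n \<ge> 1" and \<sigma>: "\<forall>t\<in>{1..T}. \<sigma> t > 0"
  shows "distr (H0_data T n \<mu> \<sigma>) (lebT T) (rowsum T n) = PiM {1..T} (\<lambda>t. density lborel (\<lambda>x. ennreal (g0 n \<mu> \<sigma> t x)))"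
proof -
  have "distr (H0_data T n \<mu> \<sigma>) (lebT T) (rowsum T n) = distr (H0_data T n \<mu> \<sigma>) (lebT T) (\<lambda>x. \<lambda>t\<in>{1..T}. (\<lambda>_. 0) t + (\<Sum>k\<in>(\<lambda>_. {1..n}) t. x (t, k)))"
    by (rule distr_cong) (auto simp: rowsum_def)
  also have "\<dots> = PiM {1..T} (\<lambda>t. density lborel (\<lambda>x. ennreal (g0 n \<mu> \<sigma> t x)))"
    by (subst rows_law[OF T n \<sigma>]) (use n in \<open>auto simp: g0_def\<close>)
  finally show ?thesis .
qed

lemma H1_rows_j:
  assumes T: "T \<ge> 1" and n: "n \<ge> 2" and \<sigma>: "\<forall>t\<in>{1..T}. \<sigma> t > 0" and \<tau>: "\<tau> \<in> {1..T}"
    and j: "j \<in> {1..n}"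
  shows "distr (H0_data T n \<mu> \<sigma>) (lebT T) (\<lambda>x. rowsum T n (x((\<tau>, j) := z)))
       = PiM {1..T} (\<lambda>t. density lborel (\<lambda>x. ennreal (g1 n \<mu> \<sigma> \<tau> z t x)))"
proof -
  define Kt where "Kt t = (if t = \<tau> then {1..n} - {j} else {1..n})" for t
  define c where "c t = (if t = \<tau> then z else 0)" for t
  have n1: "n \<ge> 1" using n by simp
  have Kt: "\<And>t. t \<in> {1..T} \<Longrightarrow> Kt t \<subseteq> {1..n}" "\<And>t. t \<in> {1..T} \<Longrightarrow> Kt t \<noteq> {}"
  proof -
    have "(if j = 1 then 2 else 1) \<in> {1..n} - {j}" using n j by auto
    then have ne: "{1..n} - {j} \<noteq> {}" by blast
    show "\<And>t. t \<in> {1..T} \<Longrightarrow> Kt t \<subseteq> {1..n}" "\<And>t. t \<in> {1..T} \<Longrightarrow> Kt t \<noteq> {}"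
      using ne n by (auto simp: Kt_def)
  qed
  have "distr (H0_data T n \<mu> \<sigma>) (lebT T) (\<lambda>x. rowsum T n (x((\<tau>, j) := z)))
      = distr (H0_data T n \<mu> \<sigma>) (lebT T) (\<lambda>x. \<lambda>t\<in>{1..T}. c t + (\<Sum>k\<in>Kt t. x (t, k)))"
  proof (rule distr_cong[OF refl refl])
    fix x
    show "rowsum T n (x((\<tau>, j) := z)) = (\<lambda>t\<in>{1..T}. c t + (\<Sum>k\<in>Kt t. x (t, k)))"
    proof (rule ext)
      fix t
      show "rowsum T n (x((\<tau>, j) := z)) t = (\<lambda>t\<in>{1..T}. c t + (\<Sum>k\<in>Kt t. x (t, k))) t"
      proof (cases "t = \<tau>")
        case True
        have "(\<Sum>k=1..n. (x((\<tau>, j) := z)) (\<tau>, k)) = (x((\<tau>, j) := z)) (\<tau>, j) + (\<Sum>k\<in>{1..n} - {j}. (x((\<tau>, j) := z)) (\<tau>, k))"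
          using j by (subst sum.remove[of _ j]) auto
        also have "\<dots> = z + (\<Sum>k\<in>{1..n} - {j}. x (\<tau>, k))" by (auto intro!: sum.cong)
        finally show ?thesis using True \<tau> by (simp add: rowsum_def c_def Kt_def)
      next
        case False then show ?thesis by (simp add: rowsum_def c_def Kt_def)
      qed
    qed
  qed
  also have "\<dots> = PiM {1..T} (\<lambda>t. density lborel (\<lambda>x. ennreal (normal_density (c t + real (card (Kt t)) * \<mu> t) (sqrt (real (card (Kt t))) * \<sigma> t) x)))"
    by (rule rows_law[OF T n1 \<sigma> Kt])
  also have "\<dots> = PiM {1..T} (\<lambda>t. density lborel (\<lambda>x. ennreal (g1 n \<mu> \<sigma> \<tau> z t x)))"
    by (rule PiM_cong[OF refl]) (use j in \<open>auto simp: g1_def c_def Kt_def card_Diff_singleton\<close>)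
  finally show ?thesis .
qed



lemma F_meas:
  assumes \<tau>: "\<tau> \<in> {1..T}"
  shows "(\<lambda>(x, j). x((\<tau>, j) := z)) \<in> measurable (H0_data T n \<mu> \<sigma> \<Otimes>\<^sub>M uniform_count_measure {1..n}) (PiM ({1..T} \<times> {1..n}) (\<lambda>_. lborel))"
proof (rule measurable_PiM_single')
  let ?M = "H0_data T n \<mu> \<sigma> \<Otimes>\<^sub>M uniform_count_measure {1..n}"
  fix i assume i: "i \<in> {1..T} \<times> {1..n}"
  have fst_m: "fst \<in> measurable ?M (PiM ({1..T} \<times> {1..n}) (\<lambda>_. lborel))"
    using measurable_fst[of "H0_data T n \<mu> \<sigma>" "uniform_count_measure {1..n}"]
    by (simp add: measurable_cong_sets[OF refl sets_H0])
  have fj: "(\<lambda>p. ((fst p)((\<tau>, j) := z)) i) \<in> measurable ?M lborel" for j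
  proof (cases "i = (\<tau>, j)")
    case True then show ?thesis by simp
  next
    case False
    have "(\<lambda>p. fst p i) \<in> measurable ?M lborel"
      using measurable_comp[OF fst_m measurable_component_singleton[OF i, of "\<lambda>_. lborel"]] by (simp add: comp_def)
    then show ?thesis using False by simp
  qed
  have sm: "snd \<in> measurable ?M (count_space {1..n})"
    using measurable_snd[of "H0_data T n \<mu> \<sigma>" "uniform_count_measure {1..n}"]
    by (simp add: measurable_cong_sets[OF refl sets_uniform_count_measure_count_space])
  have "(\<lambda>p. ((fst p)((\<tau>, snd p) := z)) i) \<in> measurable ?M lborel"
    by (rule measurable_compose_countable'[where I="{1..n}" and f="\<lambda>j p. ((fst p)((\<tau>, j) := z)) i", OF fj sm countable_finite[OF finite_atLeastAtMost]])
  then show "(\<lambda>p. (case p of (x, j) \<Rightarrow> x((\<tau>, j) := z)) i) \<in> measurable ?M lborel"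
    by (simp add: case_prod_beta)
next
  show "(\<lambda>(x, j). x((\<tau>, j) := z)) \<in> space (H0_data T n \<mu> \<sigma> \<Otimes>\<^sub>M uniform_count_measure {1..n}) \<rightarrow> (\<Pi>\<^sub>E i\<in>{1..T} \<times> {1..n}. space lborel)"
  proof
    fix p assume p: "p \<in> space (H0_data T n \<mu> \<sigma> \<Otimes>\<^sub>M uniform_count_measure {1..n})"
    obtain x j where xj: "p = (x, j)" by (cases p)
    have x: "x \<in> extensional ({1..T} \<times> {1..n})" and j: "j \<in> {1..n}"
      using p xj by (simp_all add: space_pair_measure space_H0 space_PiM PiE_def space_uniform_count_measure)
    have "x((\<tau>, j) := z) \<in> extensional ({1..T} \<times> {1..n})"
      using x j \<tau> by (simp add: extensional_def)
    then show "(case p of (x, j) \<Rightarrow> x((\<tau>, j) := z)) \<in> (\<Pi>\<^sub>E i\<in>{1..T} \<times> {1..n}. space lborel)"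
      using xj by (simp add: PiE_def)
  qed
qed

lemma H1_rows:
  assumes T: "T \<ge> 1" and n: "n \<ge> 2" and \<sigma>: "\<forall>t\<in>{1..T}. \<sigma> t > 0" and \<tau>: "\<tau> \<in> {1..T}"
  shows "distr (H1_data T n \<mu> \<sigma> \<tau> z) (lebT T) (rowsum T n) = PiM {1..T} (\<lambda>t. density lborel (\<lambda>x. ennreal (g1 n \<mu> \<sigma> \<tau> z t x)))"
    (is "_ = ?Q")
proof -
  let ?H = "H0_data T n \<mu> \<sigma>"
  let ?U = "uniform_count_measure {1..n}"
  let ?F = "\<lambda>(x, j). x((\<tau>, j) := z)"
  have Fm: "?F \<in> measurable (?H \<Otimes>\<^sub>M ?U) (PiM ({1..T} \<times> {1..n}) (\<lambda>_. lborel))" by (rule F_meas[OF \<tau>])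
  have RF: "rowsum T n \<circ> ?F \<in> measurable (?H \<Otimes>\<^sub>M ?U) (lebT T)"
    by (rule measurable_comp[OF Fm rowsum_meas])
  have Hp: "prob_space ?H" by (rule H0_prob[OF \<sigma>])
  have Up: "prob_space ?U" using n by (intro prob_space_uniform_count_measure) auto
  interpret pair_sigma_finite ?H ?U
    unfolding pair_sigma_finite_def using Hp Up by (auto intro: prob_space_imp_sigma_finite)
  interpret U: prob_space ?U by (rule Up)
  have "distr (H1_data T n \<mu> \<sigma> \<tau> z) (lebT T) (rowsum T n) = distr (?H \<Otimes>\<^sub>M ?U) (lebT T) (rowsum T n \<circ> ?F)"
    unfolding H1_data_def by (rule distr_distr[OF rowsum_meas Fm])
  also have "\<dots> = ?Q"
  proof (rule measure_eqI)
    show "sets (distr (?H \<Otimes>\<^sub>M ?U) (lebT T) (rowsum T n \<circ> ?F)) = sets ?Q"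
      by (simp cong: sets_PiM_cong)
  next
    fix A assume "A \<in> sets (distr (?H \<Otimes>\<^sub>M ?U) (lebT T) (rowsum T n \<circ> ?F))"
    then have A: "A \<in> sets (lebT T)" by simp
    have iA: "indicator A \<in> borel_measurable (lebT T)" using A by simp
    have m2: "(\<lambda>p. indicator A ((rowsum T n \<circ> ?F) p) :: ennreal) \<in> borel_measurable (?H \<Otimes>\<^sub>M ?U)"
      using measurable_comp[OF RF iA] by (simp add: comp_def)
    have "emeasure (distr (?H \<Otimes>\<^sub>M ?U) (lebT T) (rowsum T n \<circ> ?F)) A
        = (\<integral>\<^sup>+ y. indicator A y \<partial>distr (?H \<Otimes>\<^sub>M ?U) (lebT T) (rowsum T n \<circ> ?F))"
      using A by (simp add: nn_integral_indicator)
    also have "\<dots> = (\<integral>\<^sup>+ p. indicator A ((rowsum T n \<circ> ?F) p) \<partial>(?H \<Otimes>\<^sub>M ?U))"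
      by (rule nn_integral_distr[OF RF]) (use iA in simp)
    also have "\<dots> = (\<integral>\<^sup>+ j. (\<integral>\<^sup>+ x. indicator A ((rowsum T n \<circ> ?F) (x, j)) \<partial>?H) \<partial>?U)"
      by (rule nn_integral_snd[symmetric, OF m2])
    also have "\<dots> = (\<integral>\<^sup>+ j. emeasure ?Q A \<partial>?U)"
    proof (rule nn_integral_cong)
      fix j assume "j \<in> space ?U"
      then have j: "j \<in> {1..n}" by (simp add: space_uniform_count_measure)
      have Fj: "(\<lambda>x. rowsum T n (x((\<tau>, j) := z))) \<in> measurable ?H (lebT T)"
      proof -
        have "(\<lambda>x. (x, j)) \<in> measurable ?H (?H \<Otimes>\<^sub>M ?U)"
          using j by (intro measurable_Pair) (auto simp: space_uniform_count_measure)
        from measurable_comp[OF this RF] show ?thesis by (simp add: comp_def)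
      qed
      have "(\<integral>\<^sup>+ x. indicator A ((rowsum T n \<circ> ?F) (x, j)) \<partial>?H)
          = (\<integral>\<^sup>+ x. indicator A (rowsum T n (x((\<tau>, j) := z))) \<partial>?H)" by simp
      also have "\<dots> = (\<integral>\<^sup>+ y. indicator A y \<partial>distr ?H (lebT T) (\<lambda>x. rowsum T n (x((\<tau>, j) := z))))"
        by (rule nn_integral_distr[symmetric, OF Fj]) (use iA in simp)
      also have "\<dots> = emeasure (distr ?H (lebT T) (\<lambda>x. rowsum T n (x((\<tau>, j) := z)))) A"
        using A by (simp add: nn_integral_indicator)
      also have "\<dots> = emeasure ?Q A"
        by (simp only: H1_rows_j[OF T n \<sigma> \<tau> j])
      finally show "(\<integral>\<^sup>+ x. indicator A ((rowsum T n \<circ> ?F) (x, j)) \<partial>?H) = emeasure ?Q A" .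
    qed
    also have "\<dots> = emeasure ?Q A"
      using U.emeasure_space_1 by simp
    finally show "emeasure (distr (?H \<Otimes>\<^sub>M ?U) (lebT T) (rowsum T n \<circ> ?F)) A = emeasure ?Q A" .
  qed
  finally show ?thesis .
qed



lemma normal_density_scale:
  assumes c: "c > 0" and s: "s > 0"
  shows "c * normal_density a s (c * y - d) = normal_density ((a + d) / c) (s / c) y"
proof -
  have e1: "(c * y - d - a)\<^sup>2 / (2 * s\<^sup>2) = (y - (a + d) / c)\<^sup>2 / (2 * (s / c)\<^sup>2)"
    using c s by (simp add: field_simps power2_eq_square)
  have e2: "sqrt (2 * pi * (s / c)\<^sup>2) = sqrt (2 * pi * s\<^sup>2) / c"
    using c s by (simp add: power_divide real_sqrt_divide real_sqrt_mult)
  have pos: "sqrt (2 * pi * s\<^sup>2) > 0" using s by simp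
  show ?thesis unfolding normal_density_def e2
    using c pos by (simp add: e1 field_simps)
qed

theorem theoremC1:
  fixes T n \<tau> :: nat and z :: real and \<mu> \<sigma> :: "nat \<Rightarrow> real"
  assumes "T \<ge> 1" and "n \<ge> 2" and "\<tau> \<in> {1..T}"
    and "\<forall>t\<in>{1..T}. \<sigma> t > 0"
  shows "\<exists>f0 f1 :: (nat \<Rightarrow> real) \<Rightarrow> real.
     f0 \<in> borel_measurable (lebT T) \<and> f1 \<in> borel_measurable (lebT T) \<and>
     distr (H0_data T n \<mu> \<sigma>) (lebT T) (muhat T n) = density (lebT T) (\<lambda>y. ennreal (f0 y)) \<and>
     distr (H1_data T n \<mu> \<sigma> \<tau> z) (lebT T) (muhat T n) = density (lebT T) (\<lambda>y. ennreal (f1 y)) \<and>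
     (\<forall>y\<in>space (lebT T). f0 y > 0 \<and> f1 y \<ge> 0 \<and>
        (let prev = (if \<tau> = 1 then 0 else y (\<tau> - 1));
             m0 = (real \<tau> - 1) / real \<tau> * prev + \<mu> \<tau> / real \<tau>;
             v0 = (\<sigma> \<tau>)\<^sup>2 / ((real \<tau>)\<^sup>2 * real n);
             m1 = (real \<tau> - 1) / real \<tau> * prev + ((real n - 1) * \<mu> \<tau> + z) / (real \<tau> * real n);
             v1 = (real n - 1) * (\<sigma> \<tau>)\<^sup>2 / ((real \<tau>)\<^sup>2 * (real n)\<^sup>2)
         in f1 y / f0 y = phi (y \<tau>) m1 v1 / phi (y \<tau>) m0 v0))"
proof -
  note T = assms(1) and n = assms(2) and \<tau> = assms(3) and \<sigma> = assms(4)
  have n1: "n \<ge> 1" using n by simp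
  define term0 where "term0 y t = real n * real t * g0 n \<mu> \<sigma> t (Linv T n y t)" for y t
  define term1 where "term1 y t = real n * real t * g1 n \<mu> \<sigma> \<tau> z t (Linv T n y t)" for y t
  define f0 where "f0 y = (\<Prod>t=1..T. term0 y t)" for y
  define f1 where "f1 y = (\<Prod>t=1..T. term1 y t)" for y
  have g0m[measurable]: "\<And>t. g0 n \<mu> \<sigma> t \<in> borel_measurable borel" by (simp add: g0_def)
  have g1m[measurable]: "\<And>t. g1 n \<mu> \<sigma> \<tau> z t \<in> borel_measurable borel" by (simp add: g1_def)
  have g0nn: "\<And>t x. g0 n \<mu> \<sigma> t x \<ge> 0" by (simp add: g0_def)
  have g1nn: "\<And>t x. g1 n \<mu> \<sigma> \<tau> z t x \<ge> 0" by (simp add: g1_def)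
  have sd0: "\<And>t. t \<in> {1..T} \<Longrightarrow> sqrt (real n) * \<sigma> t > 0" using \<sigma> n by auto
  have sd1: "\<And>t. t \<in> {1..T} \<Longrightarrow> sqrt (real (n - 1)) * \<sigma> t > 0" using \<sigma> n by auto
  have g0p: "\<And>t. t \<in> {1..T} \<Longrightarrow> prob_space (density lborel (\<lambda>x. ennreal (g0 n \<mu> \<sigma> t x)))"
    unfolding g0_def by (rule prob_space_normal_density) (rule sd0)
  have g1p: "\<And>t. t \<in> {1..T} \<Longrightarrow> prob_space (density lborel (\<lambda>x. ennreal (g1 n \<mu> \<sigma> \<tau> z t x)))"
    unfolding g1_def using sd0 sd1 by (auto intro: prob_space_normal_density)
  have g0pos: "\<And>t x. t \<in> {1..T} \<Longrightarrow> g0 n \<mu> \<sigma> t x > 0"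
    unfolding g0_def using sd0 by (auto intro: normal_density_pos)
  have "(\<lambda>r. \<Prod>t\<in>{1..T}. real n * real t * g0 n \<mu> \<sigma> t (r t)) \<in> borel_measurable (lebT T)" by measurable
  from measurable_comp[OF Linv_meas[of T n] this]
  have f0m: "f0 \<in> borel_measurable (lebT T)" unfolding f0_def[abs_def] term0_def by (simp add: comp_def)
  have "(\<lambda>r. \<Prod>t\<in>{1..T}. real n * real t * g1 n \<mu> \<sigma> \<tau> z t (r t)) \<in> borel_measurable (lebT T)" by measurable
  from measurable_comp[OF Linv_meas[of T n] this]
  have f1m: "f1 \<in> borel_measurable (lebT T)" unfolding f1_def[abs_def] term1_def by (simp add: comp_def)
  have D0: "distr (H0_data T n \<mu> \<sigma>) (lebT T) (muhat T n) = density (lebT T) (\<lambda>y. ennreal (f0 y))"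
    unfolding f0_def term0_def
    by (rule muhat_density_general[OF n1 sets_H0 H0_rows[OF T n1 \<sigma>] g0m g0nn g0p])
  have D1: "distr (H1_data T n \<mu> \<sigma> \<tau> z) (lebT T) (muhat T n) = density (lebT T) (\<lambda>y. ennreal (f1 y))"
    unfolding f1_def term1_def
    by (rule muhat_density_general[OF n1 _ H1_rows[OF T n \<sigma> \<tau>] g1m g1nn g1p]) (simp add: H1_data_def)
  have main: "f0 y > 0 \<and> f1 y \<ge> 0 \<and>
        (let prev = (if \<tau> = 1 then 0 else y (\<tau> - 1));
             m0 = (real \<tau> - 1) / real \<tau> * prev + \<mu> \<tau> / real \<tau>;
             v0 = (\<sigma> \<tau>)\<^sup>2 / ((real \<tau>)\<^sup>2 * real n);
             m1 = (real \<tau> - 1) / real \<tau> * prev + ((real n - 1) * \<mu> \<tau> + z) / (real \<tau> * real n);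
             v1 = (real n - 1) * (\<sigma> \<tau>)\<^sup>2 / ((real \<tau>)\<^sup>2 * (real n)\<^sup>2)
         in f1 y / f0 y = phi (y \<tau>) m1 v1 / phi (y \<tau>) m0 v0)" for y
  proof -
    have t0pos: "\<And>t. t \<in> {1..T} \<Longrightarrow> term0 y t > 0"
      unfolding term0_def using n g0pos by (auto intro!: mult_pos_pos)
    have f0pos: "f0 y > 0" unfolding f0_def by (rule prod_pos) (use t0pos in auto)
    have f1nn: "f1 y \<ge> 0" unfolding f1_def term1_def by (rule prod_nonneg) (use g1nn in auto)
    define P where "P = (\<Prod>t\<in>{1..T} - {\<tau>}. term0 y t)"
    have Ppos: "P > 0" unfolding P_def by (rule prod_pos) (use t0pos in auto)
    have f0e: "f0 y = term0 y \<tau> * P" unfolding f0_def P_def using \<tau> by (simp add: prod.remove)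
    have f1e: "f1 y = term1 y \<tau> * P" unfolding f1_def P_def using \<tau>
      by (simp add: prod.remove term1_def term0_def g1_def g0_def)
    define prev where "prev = (if \<tau> = 1 then 0 else y (\<tau> - 1))"
    have tau1: "real \<tau> \<ge> 1" using \<tau> by auto
    have Lt: "Linv T n y \<tau> = real n * real \<tau> * y \<tau> - real n * (real \<tau> - 1) * prev"
      using \<tau> by (auto simp: Linv_def prev_def of_nat_diff)
    have cpos: "real n * real \<tau> > 0" using n tau1 by simp
    have sig: "\<sigma> \<tau> > 0" using \<sigma> \<tau> by auto
    have nr: "real (n - 1) = real n - 1" using n by (simp add: of_nat_diff)
    have npos: "real n > 0" "real n - 1 > 0" using n by auto
    have T0: "term0 y \<tau> = phi (y \<tau>) ((real \<tau> - 1) / real \<tau> * prev + \<mu> \<tau> / real \<tau>) ((\<sigma> \<tau>)\<^sup>2 / ((real \<tau>)\<^sup>2 * real n))"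
    proof -
      have "term0 y \<tau> = normal_density ((real n * \<mu> \<tau> + real n * (real \<tau> - 1) * prev) / (real n * real \<tau>)) (sqrt (real n) * \<sigma> \<tau> / (real n * real \<tau>)) (y \<tau>)"
        unfolding term0_def g0_def Lt by (rule normal_density_scale[OF cpos sd0[OF \<tau>]])
      also have "(real n * \<mu> \<tau> + real n * (real \<tau> - 1) * prev) / (real n * real \<tau>) = (real \<tau> - 1) / real \<tau> * prev + \<mu> \<tau> / real \<tau>"
        using npos tau1 by (simp add: field_simps)
      also have "sqrt (real n) * \<sigma> \<tau> / (real n * real \<tau>) = sqrt ((\<sigma> \<tau>)\<^sup>2 / ((real \<tau>)\<^sup>2 * real n))"
      proof -
        have h1: "sqrt ((\<sigma> \<tau>)\<^sup>2 / ((real \<tau>)\<^sup>2 * real n)) = \<sigma> \<tau> / (real \<tau> * sqrt (real n))"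
          using sig tau1 by (simp add: real_sqrt_divide real_sqrt_mult)
        have h2: "sqrt (real n) * sqrt (real n) = real n" using npos by simp
        have sp: "sqrt (real n) > 0" using npos by simp
        have key: "\<And>s a b. (s::real) > 0 \<Longrightarrow> s * a / (s * s * b) = a / (b * s)" by (simp add: field_simps)
        have "sqrt (real n) * \<sigma> \<tau> / (real n * real \<tau>) = sqrt (real n) * \<sigma> \<tau> / ((sqrt (real n) * sqrt (real n)) * real \<tau>)"
          by (simp only: h2)
        also have "\<dots> = \<sigma> \<tau> / (real \<tau> * sqrt (real n))" by (rule key[OF sp])
        also have "\<dots> = sqrt ((\<sigma> \<tau>)\<^sup>2 / ((real \<tau>)\<^sup>2 * real n))" by (rule h1[symmetric])
        finally show ?thesis .
      qed
      finally show ?thesis by (simp add: phi_def)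
    qed
    have g1\<tau>: "g1 n \<mu> \<sigma> \<tau> z \<tau> = normal_density (z + real (n - 1) * \<mu> \<tau>) (sqrt (real (n - 1)) * \<sigma> \<tau>)"
      by (simp add: g1_def)
    have T1: "term1 y \<tau> = phi (y \<tau>) ((real \<tau> - 1) / real \<tau> * prev + ((real n - 1) * \<mu> \<tau> + z) / (real \<tau> * real n)) ((real n - 1) * (\<sigma> \<tau>)\<^sup>2 / ((real \<tau>)\<^sup>2 * (real n)\<^sup>2))"
    proof -
      have "term1 y \<tau> = normal_density ((z + real (n - 1) * \<mu> \<tau> + real n * (real \<tau> - 1) * prev) / (real n * real \<tau>)) (sqrt (real (n - 1)) * \<sigma> \<tau> / (real n * real \<tau>)) (y \<tau>)"
        unfolding term1_def g1\<tau> Lt by (rule normal_density_scale[OF cpos sd1[OF \<tau>]])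
      also have "(z + real (n - 1) * \<mu> \<tau> + real n * (real \<tau> - 1) * prev) / (real n * real \<tau>) = (real \<tau> - 1) / real \<tau> * prev + ((real n - 1) * \<mu> \<tau> + z) / (real \<tau> * real n)"
        using npos tau1 nr by (simp add: field_simps)
      also have "sqrt (real (n - 1)) * \<sigma> \<tau> / (real n * real \<tau>) = sqrt ((real n - 1) * (\<sigma> \<tau>)\<^sup>2 / ((real \<tau>)\<^sup>2 * (real n)\<^sup>2))"
      proof -
        have nn: "sqrt (real (n - 1)) * \<sigma> \<tau> / (real n * real \<tau>) \<ge> 0" using sig npos tau1 by simp
        have sq: "(sqrt (real (n - 1)) * \<sigma> \<tau> / (real n * real \<tau>))\<^sup>2 = (real n - 1) * (\<sigma> \<tau>)\<^sup>2 / ((real \<tau>)\<^sup>2 * (real n)\<^sup>2)"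
          using nr npos by (simp add: power_divide power_mult_distrib mult.commute)
        show ?thesis by (rule real_sqrt_unique[OF sq nn, symmetric])
      qed
      finally show ?thesis by (simp add: phi_def)
    qed
    have "f1 y / f0 y = term1 y \<tau> / term0 y \<tau>" using Ppos by (simp add: f0e f1e)
    then show ?thesis using f0pos f1nn T0 T1 by (simp add: Let_def prev_def)
  qed
  show ?thesis
    by (rule exI[of _ f0], rule exI[of _ f1]) (use f0m f1m D0 D1 main in blast)
qed


end
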